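(* Let $\bar\gamma_{\mathrm{E}}>0$, $\mathcal{R}>0$ and $\alpha>0$ be fixed, and let $\bar\gamma_{\mathrm{D}}>0$ with $\bar\gamma_{\mathrm{R}}=\alpha\bar\gamma_{\mathrm{D}}$. Let $h_{\mathrm{S},\mathrm{R}},h_{\mathrm{R},\mathrm{D}},h_{\mathrm{S},\mathrm{E}}$ be independent $\mathcal{CN}(0,1)$ random variables, and define $$\mathcal{R}^{2}_{\mathrm{S}\to\mathrm{R}}=\log_2\frac{1+\bar\gamma_{\mathrm{R}}|h_{\mathrm{S},\mathrm{R}}|^2}{1+\bar\gamma_{\mathrm{E}}|h_{\mathrm{S},\mathrm{E}}|^2},\qquad \mathcal{R}^{2}_{\mathrm{R}\to\mathrm{D}}=\log_2\left(1+\bar\gamma_{\mathrm{D}}|h_{\mathrm{R},\mathrm{D}}|^2\right),$$ $\mathcal{R}_2=\max\{\min\{\mathcal{R}^{2}_{\mathrm{S}\to\mathrm{R}},\mathcal{R}^{2}_{\mathrm{R}\to\mathrm{D}}\},0\}$ and $\mathcal{P}_2=\Pr(\mathcal{R}_2<\mathcal{R})$. Then as $\bar\gamma_{\mathrm{D}}\to\infty$, $$\mathcal{P}_2\approx\mathcal{M}_2\bar\gamma_{\mathrm{D}}^{-1},$$ in the sense that $\bar\gamma_{\mathrm{D}}\mathcal{P}_2\to\mathcal{M}_2$, where $\mathcal{M}_2=(2^{\mathcal{R}}-1)(1+1/\alpha)+2^{\mathcal{R}}\bar\gamma_{\mathrm{E}}/\alpha>0$.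
   Context: $\mathcal{CN}(0,1)$ denotes a circularly symmetric complex Gaussian random variable with zero mean and unit variance (Rayleigh fading). The quantities model a decode-and-forward relay system where the eavesdropper overhears only the source; $\bar\gamma$'s are average SNRs, $\mathcal{R}_2$ the secrecy capacity and $\mathcal{P}_2$ the secrecy outage probability. *)

theory Defs
  imports "HOL-Probability.Probability"
begin

definition CN01_density :: "complex \<Rightarrow> ennreal" where
  "CN01_density z = ennreal (exp (- ((cmod z)^2)) / (of_real pi :: real))"

definition rate_SR :: "real \<Rightarrow> real \<Rightarrow> complex \<Rightarrow> complex \<Rightarrow> real" where
  "rate_SR gR gE hSR hSE = log 2 ((1 + gR * (cmod hSR)^2) / (1 + gE * (cmod hSE)^2))"

definition rate_RD :: "real \<Rightarrow> complex \<Rightarrow> real" where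
  "rate_RD gD hRD = log 2 (1 + gD * (cmod hRD)^2)"

definition secrecy_rate2 :: "real \<Rightarrow> real \<Rightarrow> real \<Rightarrow> complex \<Rightarrow> complex \<Rightarrow> complex \<Rightarrow> real" where
  "secrecy_rate2 gE alpha gD hSR hRD hSE =
     max (min (rate_SR (alpha * gD) gE hSR hSE) (rate_RD gD hRD)) 0"

definition M2_const :: "real \<Rightarrow> real \<Rightarrow> real \<Rightarrow> real" where
  "M2_const gE alpha R = (2 powr R - 1) * (1 + 1 / alpha) + 2 powr R * gE / alpha"

end

theory Submission
  imports Defs
begin

lemma exp_tail:
  assumes "0 \<le> r"
  shows "(\<integral>\<^sup>+s. ennreal (exponential_density 1 s) * indicator {r<..} s \<partial>lborel) = ennreal (exp (- r))"
proof -
  interpret P: prob_space "density lborel (exponential_density 1)"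
    by (rule prob_space_exponential_density) simp
  have "emeasure (density lborel (exponential_density 1)) {r<..} =
        1 - emeasure (density lborel (exponential_density 1)) {..r}"
  proof -
    have "{r<..} = space (density lborel (exponential_density 1)) - {..r}" by auto
    then show ?thesis using emeasure_compl[of "{..r}" "density lborel (exponential_density 1)"] P.emeasure_space_1 by simp
  qed
  also have "\<dots> = 1 - ennreal (1 - exp (- r))"
    using assms by (simp add: emeasure_erlang_density erlang_CDF_def)
  also have "\<dots> = ennreal (exp (- r))"
    using assms by (subst ennreal_1[symmetric], subst ennreal_minus) auto
  finally show ?thesis by (simp add: emeasure_density)
qed

lemma ball_meas:
  assumes "0 \<le> r"
  shows "emeasure lborel (ball (0::complex) r) = ennreal (pi * r^2)"
    and "emeasure lborel (cball (0::complex) r) = ennreal (pi * r^2)"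
  using emeasure_ball[OF assms, of "0::complex"] emeasure_cball[OF assms, of "0::complex"]
  by (simp_all add: eval_unit_ball_vol)

lemma pow_int1:
  assumes "0 \<le> t"
  shows "(\<integral>\<^sup>+x. ennreal (x * exp (-x)) * indicator {0 .. t} x \<partial>lborel) = ennreal (1 - exp (-t) - t * exp (-t))"
  using nn_intergal_power_times_exp_Icc[OF assms, of 1]
  by (simp add: algebra_simps)

lemma nonneg1: "0 \<le> t \<Longrightarrow> 0 \<le> 1 - exp (-t) - t * exp (-t :: real)"
proof -
  assume "0 \<le> t"
  have "1 + t \<le> exp t" by (rule exp_ge_add_one_self)
  then have "(1 + t) * exp (-t) \<le> exp t * exp (-t)" by (intro mult_right_mono) auto
  then show ?thesis by (simp add: exp_minus algebra_simps)
qed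

lemma sqrt_lt_iff2: "0 \<le> (a::real) \<Longrightarrow> a < sqrt s \<longleftrightarrow> a^2 < s"
  by (metis abs_of_nonneg real_sqrt_abs real_sqrt_less_iff)

lemma sqrt_le_iff2: "0 \<le> (a::real) \<Longrightarrow> a \<le> sqrt s \<longleftrightarrow> a^2 \<le> s"
  by (metis abs_of_nonneg real_sqrt_abs real_sqrt_le_iff)

lemma disc:
  assumes t: "0 \<le> t"
  shows "(\<integral>\<^sup>+z. CN01_density z * indicator {z. (cmod z)^2 \<le> t} z \<partial>lborel) = ennreal (1 - exp (-t))"
proof -
  let ?D = "{z::complex. (cmod z)^2 \<le> t}"
  let ?ed = "\<lambda>s. ennreal (exponential_density 1 s)"
  have e1: "CN01_density z = ennreal (1/pi) * (\<integral>\<^sup>+s. ?ed s * indicator {(cmod z)^2<..} s \<partial>lborel)" for z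
    by (simp add: exp_tail CN01_density_def ennreal_mult[symmetric] divide_inverse mult.commute)
  have "(\<integral>\<^sup>+z. CN01_density z * indicator ?D z \<partial>lborel) =
     (\<integral>\<^sup>+z. (\<integral>\<^sup>+s. ennreal (1/pi) * indicator ?D z * (?ed s * indicator {(cmod z)^2<..} s) \<partial>lborel) \<partial>lborel)"
    apply (intro nn_integral_cong)
    apply (subst nn_integral_cmult)
     apply measurable
    apply (simp add: e1 mult_ac)
    done
  also have "\<dots> = (\<integral>\<^sup>+s. (\<integral>\<^sup>+z. ennreal (1/pi) * indicator ?D z * (?ed s * indicator {(cmod z)^2<..} s) \<partial>lborel) \<partial>lborel)"
    by (rule lborel_pair.Fubini'[symmetric]) (unfold greaterThan_def mem_Collect_eq, measurable)
  also have "\<dots> = (\<integral>\<^sup>+s. ennreal (1/pi) * ?ed s * emeasure lborel (?D \<inter> {z. (cmod z)^2 < s}) \<partial>lborel)"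
  proof (intro nn_integral_cong)
    fix s :: real
    have "(\<integral>\<^sup>+z. ennreal (1/pi) * indicator ?D z * (?ed s * indicator {(cmod z)^2<..} s) \<partial>lborel)
        = (\<integral>\<^sup>+z. (ennreal (1/pi) * ?ed s) * indicator (?D \<inter> {z. (cmod z)^2 < s}) z \<partial>lborel)"
      by (intro nn_integral_cong) (auto simp: indicator_def)
    also have "\<dots> = ennreal (1/pi) * ?ed s * emeasure lborel (?D \<inter> {z. (cmod z)^2 < s})"
      by (subst nn_integral_cmult_indicator) auto
    finally show "(\<integral>\<^sup>+z. ennreal (1/pi) * indicator ?D z * (?ed s * indicator {(cmod z)^2<..} s) \<partial>lborel)
        = ennreal (1/pi) * ?ed s * emeasure lborel (?D \<inter> {z. (cmod z)^2 < s})" .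
  qed
  also have "\<dots> = (\<integral>\<^sup>+s. ennreal (s * exp (-s)) * indicator {0..t} s + ennreal t * (?ed s * indicator {t<..} s) \<partial>lborel)"
  proof (intro nn_integral_cong)
    fix s :: real
    show "ennreal (1/pi) * ?ed s * emeasure lborel (?D \<inter> {z. (cmod z)^2 < s}) =
      ennreal (s * exp (-s)) * indicator {0..t} s + ennreal t * (?ed s * indicator {t<..} s)"
    proof (cases "s \<le> 0")
      case True
      then have "?D \<inter> {z. (cmod z)^2 < s} = {}"
        by auto (metis not_less order.trans zero_le_power2)
      with True t show ?thesis by (auto simp: indicator_def exponential_density_def)
    next
      case False
      show ?thesis
      proof (cases "s \<le> t")
        case True
        have "?D \<inter> {z. (cmod z)^2 < s} = ball 0 (sqrt s)"
          using True False by (auto simp: sqrt_lt_iff2)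
        then show ?thesis using True False
          by (simp add: ball_meas indicator_def exponential_density_def ennreal_mult[symmetric])
      next
        case False2: False
        have "?D \<inter> {z. (cmod z)^2 < s} = cball 0 (sqrt t)"
          using False2 by (auto simp: sqrt_le_iff2)
        then show ?thesis using t False2 False
          by (simp add: ball_meas indicator_def exponential_density_def ennreal_mult[symmetric])
      qed
    qed
  qed
  also have "\<dots> = ennreal (1 - exp (-t) - t * exp (-t)) + ennreal t * ennreal (exp (-t))"
    by (subst nn_integral_add) (auto simp: nn_integral_cmult pow_int1 exp_tail t)
  also have "\<dots> = ennreal (1 - exp (-t))"
    using t nonneg1[OF t] by (simp add: ennreal_mult[symmetric] ennreal_plus[symmetric] del: ennreal_plus)
  finally show ?thesis .
qed

lemma lim_aux: "((\<lambda>x::real. x * (1 - exp (-(a / x)) / (1 + b / x))) \<longlongrightarrow> a + b) at_top"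
proof -
  define f where "f = (\<lambda>t::real. 1 - exp (-(a*t)) / (1 + b*t))"
  have d: "((\<lambda>t. exp (-(a*t)) / (1 + b*t)) has_real_derivative (-(a+b))) (at 0)"
    by (auto intro!: derivative_eq_intros)
  have "(f has_real_derivative (a+b)) (at 0)"
    unfolding f_def using DERIV_diff[OF DERIV_const[of 1] d] by (simp add: add.commute)
  then have "((\<lambda>y. (f y - f 0) / (y - 0)) \<longlongrightarrow> a + b) (at 0)"
    by (simp add: has_field_derivative_iff)
  then have "((\<lambda>y. (f y - f 0) / (y - 0)) \<longlongrightarrow> a + b) (at_right 0)"
    by (rule tendsto_mono[OF at_within_le_at])
  from filterlim_compose[OF this filterlim_inverse_at_right_top]
  have lim: "((\<lambda>x. (f (inverse x) - f 0) / (inverse x - 0)) \<longlongrightarrow> a + b) at_top" .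
  have ev: "\<forall>\<^sub>F x in at_top. (f (inverse x) - f 0) / (inverse x - 0) = x * (1 - exp (-(a / x)) / (1 + b / x))"
    using eventually_gt_at_top[of 0]
    by eventually_elim (simp add: f_def divide_inverse mult.commute)
  show ?thesis using tendsto_cong[OF ev] lim by simp
qed

lemma exp_tail_ge:
  assumes "0 \<le> r"
  shows "(\<integral>\<^sup>+s. ennreal (exponential_density 1 s) * indicator {r..} s \<partial>lborel) = ennreal (exp (- r))"
proof -
  have "(\<integral>\<^sup>+s. ennreal (exponential_density 1 s) * indicator {r..} s \<partial>lborel) =
        (\<integral>\<^sup>+s. ennreal (exponential_density 1 s) * indicator {r<..} s \<partial>lborel)"
    by (intro nn_integral_cong_AE, use AE_lborel_singleton[of r] in eventually_elim)
       (auto simp: indicator_def)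
  then show ?thesis using exp_tail[OF assms] by simp
qed

lemma sq_exp:
  assumes "prob_space M" and D: "distributed M lborel H CN01_density"
  shows "distributed M lborel (\<lambda>\<omega>. (cmod (H \<omega>))^2) (exponential_density 1)"
proof -
  have [measurable]: "H \<in> borel_measurable M"
    using distributed_measurable[OF D] by simp
  have m: "(\<lambda>\<omega>. (cmod (H \<omega>))^2) \<in> borel_measurable M" by measurable
  have e: "emeasure M {x \<in> space M. (cmod (H x))^2 \<le> a} = ennreal (1 - exp (- a * 1))" if a: "0 \<le> a" for a
  proof -
    have "{x \<in> space M. (cmod (H x))^2 \<le> a} = H -` {z. (cmod z)^2 \<le> a} \<inter> space M" by auto
    also have "emeasure M \<dots> = (\<integral>\<^sup>+z. CN01_density z * indicator {z. (cmod z)^2 \<le> a} z \<partial>lborel)"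
      by (rule distributed_emeasure[OF D]) measurable
    also have "\<dots> = ennreal (1 - exp (- a))" by (rule disc[OF a])
    finally show ?thesis by simp
  qed
  show ?thesis
  proof (rule exponential_distributedI[OF m])
    fix a :: real assume a: "0 \<le> a"
    show "emeasure M {x \<in> space M. (cmod (H x))^2 \<le> a} = 1 - ennreal (exp (- a * 1))"
      using e[OF a] ennreal_minus[of "exp (-a)" 1] by simp
  qed simp
qed

lemma exp_ge_prob:
  assumes "prob_space M" and D: "distributed M lborel X (exponential_density 1)" and a: "0 \<le> a"
  shows "emeasure M {\<omega> \<in> space M. a \<le> X \<omega>} = ennreal (exp (- a))"
proof -
  have "{\<omega> \<in> space M. a \<le> X \<omega>} = X -` {a..} \<inter> space M" by auto
  also have "emeasure M \<dots> = (\<integral>\<^sup>+s. ennreal (exponential_density 1 s) * indicator {a..} s \<partial>lborel)"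
    by (rule distributed_emeasure[OF D]) measurable
  also have "\<dots> = ennreal (exp (- a))" by (rule exp_tail_ge[OF a])
  finally show ?thesis .
qed


lemma int_exp_density:
  assumes "0 < l"
  shows "(\<integral>\<^sup>+z. ennreal (exponential_density l z) \<partial>lborel) = 1"
proof -
  interpret P: prob_space "density lborel (exponential_density l)"
    by (rule prob_space_exponential_density) fact
  have "emeasure (density lborel (exponential_density l)) UNIV = 1"
    using P.emeasure_space_1 by simp
  then show ?thesis by (simp add: emeasure_density)
qed

lemma joint_prob:
  assumes P: "prob_space M"
    and DX: "distributed M lborel X (exponential_density 1)"
    and DZ: "distributed M lborel Z (exponential_density 1)"
    and ind: "prob_space.indep_var M lborel X lborel Z"
    and u: "0 \<le> u" and v: "0 \<le> v"
  shows "emeasure M {\<omega>\<in>space M. u + v * Z \<omega> \<le> X \<omega>} = ennreal (exp (-u) / (1+v))"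
proof -
  interpret prob_space M by fact
  let ?ed = "\<lambda>s. ennreal (exponential_density 1 s)"
  have J: "distributed M (lborel \<Otimes>\<^sub>M lborel) (\<lambda>\<omega>. (X \<omega>, Z \<omega>)) (\<lambda>(x,z). ?ed x * ?ed z)"
    by (rule distributed_joint_indep[OF sigma_finite_lborel sigma_finite_lborel DX DZ ind])
  have "{\<omega>\<in>space M. u + v * Z \<omega> \<le> X \<omega>} = (\<lambda>\<omega>. (X \<omega>, Z \<omega>)) -` {p. u + v * snd p \<le> fst p} \<inter> space M"
    by auto
  also have "emeasure M \<dots> = (\<integral>\<^sup>+p. (\<lambda>(x,z). ?ed x * ?ed z) p * indicator {p. u + v * snd p \<le> fst p} p \<partial>(lborel \<Otimes>\<^sub>M lborel))"
  proof (rule distributed_emeasure[OF J])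
    have "{p::real\<times>real. u + v * snd p \<le> fst p} = {p \<in> space (borel \<Otimes>\<^sub>M borel). u + v * snd p \<le> fst p}"
      by (auto simp: space_pair_measure)
    also have "\<dots> \<in> sets (borel \<Otimes>\<^sub>M borel)" by measurable
    finally show "{p::real\<times>real. u + v * snd p \<le> fst p} \<in> sets (lborel \<Otimes>\<^sub>M lborel)" by simp
  qed
  also have "\<dots> = (\<integral>\<^sup>+z. (\<integral>\<^sup>+x. (\<lambda>(x,z). ?ed x * ?ed z) (x,z) * indicator {p. u + v * snd p \<le> fst p} (x,z) \<partial>lborel) \<partial>lborel)"
    by (rule lborel_pair.nn_integral_snd[symmetric]) measurable
  also have "\<dots> = (\<integral>\<^sup>+z. ennreal (exponential_density 1 z * exp (-(u + v * z))) \<partial>lborel)"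
  proof (intro nn_integral_cong)
    fix z :: real
    show "(\<integral>\<^sup>+x. (\<lambda>(x,z). ?ed x * ?ed z) (x,z) * indicator {p. u + v * snd p \<le> fst p} (x,z) \<partial>lborel)
      = ennreal (exponential_density 1 z * exp (-(u + v * z)))"
    proof (cases "z < 0")
      case True
      then show ?thesis by (simp add: exponential_density_def)
    next
      case False
      have "(\<integral>\<^sup>+x. (\<lambda>(x,z). ?ed x * ?ed z) (x,z) * indicator {p. u + v * snd p \<le> fst p} (x,z) \<partial>lborel)
          = (\<integral>\<^sup>+x. ?ed z * (?ed x * indicator {u + v * z..} x) \<partial>lborel)"
        by (intro nn_integral_cong) (auto simp: indicator_def mult_ac)
      also have "\<dots> = ?ed z * ennreal (exp (-(u + v * z)))"
        using False u v by (subst nn_integral_cmult) (auto simp: exp_tail_ge)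
      finally show ?thesis using False by (simp add: ennreal_mult[symmetric] exponential_density_def)
    qed
  qed
  also have "\<dots> = (\<integral>\<^sup>+z. ennreal (exp (-u) / (1+v)) * ennreal (exponential_density (1+v) z) \<partial>lborel)"
  proof (intro nn_integral_cong)
    fix z :: real
    have "exponential_density 1 z * exp (-(u + v * z)) = exp (-u) / (1+v) * exponential_density (1+v) z"
      using v by (auto simp: exponential_density_def field_simps exp_add[symmetric] exp_diff)
    then show "ennreal (exponential_density 1 z * exp (-(u + v * z))) = ennreal (exp (-u) / (1+v)) * ennreal (exponential_density (1+v) z)"
      using v by (simp add: ennreal_mult[symmetric] exponential_density_nonneg)
  qed
  also have "\<dots> = ennreal (exp (-u) / (1+v))"
    using v by (subst nn_integral_cmult) (auto simp: int_exp_density)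
  finally show ?thesis .
qed


lemma event_iff:
  fixes gE R alpha gD :: real and h0 h1 h2 :: complex
  assumes R: "R > 0" and gE: "gE > 0" and al: "alpha > 0" and gD: "gD > 0"
  shows "secrecy_rate2 gE alpha gD h0 h1 h2 < R \<longleftrightarrow>
    \<not> ((2 powr R - 1) / (alpha * gD) + 2 powr R * gE / (alpha * gD) * (cmod h2)^2 \<le> (cmod h0)^2
        \<and> (2 powr R - 1) / gD \<le> (cmod h1)^2)"
proof -
  define c where "c = (2::real) powr R"
  have c: "c > 1" unfolding c_def using R by (simp add: gr_one_powr)
  define x0 where "x0 = (cmod h0)^2"
  define x1 where "x1 = (cmod h1)^2"
  define x2 where "x2 = (cmod h2)^2"
  have x: "x0 \<ge> 0" "x1 \<ge> 0" "x2 \<ge> 0" by (simp_all add: x0_def x1_def x2_def)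
  have p1: "1 + gD * x1 > 0" "1 + alpha * gD * x0 > 0" "1 + gE * x2 > 0"
    using x gD gE al by (simp_all add: add_pos_nonneg)
  have "secrecy_rate2 gE alpha gD h0 h1 h2 < R \<longleftrightarrow>
        log 2 ((1 + alpha * gD * x0) / (1 + gE * x2)) < R \<or> log 2 (1 + gD * x1) < R"
    using R by (auto simp: secrecy_rate2_def rate_SR_def rate_RD_def x0_def x1_def x2_def)
  also have "log 2 (1 + gD * x1) < R \<longleftrightarrow> 1 + gD * x1 < c"
    using p1 by (simp add: log_less_iff c_def)
  also have "\<dots> \<longleftrightarrow> x1 < (c - 1) / gD"
    using gD by (simp add: pos_less_divide_eq mult.commute, arith)
  also have "log 2 ((1 + alpha * gD * x0) / (1 + gE * x2)) < R \<longleftrightarrow> (1 + alpha * gD * x0) / (1 + gE * x2) < c"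
    using p1 by (simp add: log_less_iff c_def)
  also have "\<dots> \<longleftrightarrow> 1 + alpha * gD * x0 < c * (1 + gE * x2)"
    using p1 by (simp add: pos_divide_less_eq)
  also have "\<dots> \<longleftrightarrow> x0 < (c - 1) / (alpha * gD) + c * gE / (alpha * gD) * x2"
  proof -
    have "(c - 1) / (alpha * gD) + c * gE / (alpha * gD) * x2 = (c - 1 + c * gE * x2) / (alpha * gD)"
      using al gD by (simp add: field_simps)
    moreover have "x0 < (c - 1 + c * gE * x2) / (alpha * gD) \<longleftrightarrow> alpha * gD * x0 < c - 1 + c * gE * x2"
      using al gD by (simp add: pos_less_divide_eq mult.commute)
    ultimately show ?thesis by (simp add: algebra_simps)
  qed
  finally show ?thesis by (auto simp: c_def x0_def x1_def x2_def not_le)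
qed


theorem theorem5:
  fixes M :: "'a measure" and h :: "nat \<Rightarrow> 'a \<Rightarrow> complex"
    and gE R alpha :: real
  assumes "prob_space M"
    and "prob_space.indep_vars M (\<lambda>_. borel) h {0, 1, 2}"
    and "\<forall>i\<in>{0, 1, 2}. distributed M lborel (h i) CN01_density"
    and "gE > 0" and "R > 0" and "alpha > 0"
  shows "M2_const gE alpha R > 0 \<and>
    ((\<lambda>gD. gD * measure M {\<omega> \<in> space M.
        secrecy_rate2 gE alpha gD (h 0 \<omega>) (h 1 \<omega>) (h 2 \<omega>) < R})
      \<longlongrightarrow> M2_const gE alpha R) at_top"
proof -
  interpret prob_space M by fact
  note gE = \<open>gE > 0\<close> and R = \<open>R > 0\<close> and al = \<open>alpha > 0\<close>
  define c where "c = (2::real) powr R"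
  have c: "c > 1" unfolding c_def using R by (simp add: gr_one_powr)
  define a where "a = (c - 1) * (1 + 1 / alpha)"
  define b where "b = c * gE / alpha"
  have M2: "M2_const gE alpha R = a + b"
    by (simp add: M2_const_def a_def b_def c_def)
  have a0: "a > 0" using c al by (simp add: a_def add_pos_pos)
  have b0: "b > 0" using c al gE by (simp add: b_def)
  define X where "X = (\<lambda>i \<omega>. (cmod (h i \<omega>))^2)"
  have Xd: "distributed M lborel (X i) (exponential_density 1)" if "i \<in> {0,1,2}" for i
    unfolding X_def using sq_exp[OF \<open>prob_space M\<close>] assms(3) that by blast
  have indX: "indep_vars (\<lambda>_. borel) X {0,1,2}"
    unfolding X_def by (rule indep_vars_compose2[OF assms(2)]) measurable
  have ind02: "indep_var lborel (X 0) lborel (X 2)"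
  proof -
    have "indep_var (PiM {0} (\<lambda>_. borel)) (\<lambda>\<omega>. restrict (\<lambda>i. X i \<omega>) {0})
                    (PiM {2} (\<lambda>_. borel)) (\<lambda>\<omega>. restrict (\<lambda>i. X i \<omega>) {2})"
      by (rule indep_var_restrict[OF indX]) auto
    from indep_var_compose[OF this, of "\<lambda>f. f 0" lborel "\<lambda>f. f 2" lborel]
    show ?thesis by (simp add: comp_def)
  qed
  have indB: "indep_var (PiM {0,2} (\<lambda>_. borel)) (\<lambda>\<omega>. restrict (\<lambda>i. X i \<omega>) {0,2})
                    (PiM {1} (\<lambda>_. borel)) (\<lambda>\<omega>. restrict (\<lambda>i. X i \<omega>) {1})"
    by (rule indep_var_restrict[OF indX]) auto
  have [measurable]: "X i \<in> borel_measurable M" if "i \<in> {0,1,2}" for i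
    using distributed_measurable[OF Xd[OF that]] by simp
  have key: "measure M {\<omega> \<in> space M. secrecy_rate2 gE alpha gD (h 0 \<omega>) (h 1 \<omega>) (h 2 \<omega>) < R}
      = 1 - exp (-(a / gD)) / (1 + b / gD)" if gD: "gD > 0" for gD
  proof -
    define u where "u = (c - 1) / (alpha * gD)"
    define v where "v = c * gE / (alpha * gD)"
    define w where "w = (c - 1) / gD"
    have u: "u \<ge> 0" and v: "v \<ge> 0" and w: "w \<ge> 0"
      using c gE al gD by (simp_all add: u_def v_def w_def)
    define C0 where "C0 = {\<omega> \<in> space M. u + v * X 2 \<omega> \<le> X 0 \<omega>}"
    define C1 where "C1 = {\<omega> \<in> space M. w \<le> X 1 \<omega>}"
    have C0m: "C0 \<in> events" unfolding C0_def by measurable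
    have C1m: "C1 \<in> events" unfolding C1_def by measurable
    have S: "{\<omega> \<in> space M. secrecy_rate2 gE alpha gD (h 0 \<omega>) (h 1 \<omega>) (h 2 \<omega>) < R} = space M - (C0 \<inter> C1)"
      using event_iff[OF R gE al gD]
      by (auto simp: C0_def C1_def X_def u_def v_def w_def c_def)
    have "ennreal (prob C0) = ennreal (exp (-u) / (1+v))"
      using joint_prob[OF \<open>prob_space M\<close> Xd[of 0] Xd[of 2] ind02 u v]
      by (simp add: C0_def emeasure_eq_measure)
    then have "prob C0 = exp (-u) / (1+v)"
      using v by (subst (asm) ennreal_inj) auto
    moreover have "ennreal (prob C1) = ennreal (exp (-w))"
      using exp_ge_prob[OF \<open>prob_space M\<close> Xd[of 1] w]
      by (simp add: C1_def emeasure_eq_measure)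
    then have "prob C1 = exp (-w)"
      by (subst (asm) ennreal_inj) auto
    moreover have "prob (C0 \<inter> C1) = prob C0 * prob C1"
    proof -
      let ?A = "{f \<in> space (PiM {0,2} (\<lambda>_. borel)). u + v * f 2 \<le> (f 0 :: real)}"
      let ?B = "{f \<in> space (PiM {1::nat} (\<lambda>_. borel)). w \<le> (f 1 :: real)}"
      have As: "?A \<in> sets (PiM {0,2} (\<lambda>_. borel))" by measurable
      have Bs: "?B \<in> sets (PiM {1} (\<lambda>_. borel))" by measurable
      have e1: "(\<lambda>x. ((\<lambda>\<omega>. restrict (\<lambda>i. X i \<omega>) {0,2}) x, (\<lambda>\<omega>. restrict (\<lambda>i. X i \<omega>) {1}) x)) -` (?A \<times> ?B) \<inter> space M = C0 \<inter> C1"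
        by (auto simp: C0_def C1_def space_PiM)
      have e2: "(\<lambda>\<omega>. restrict (\<lambda>i. X i \<omega>) {0,2}) -` ?A \<inter> space M = C0"
        by (auto simp: C0_def space_PiM)
      have e3: "(\<lambda>\<omega>. restrict (\<lambda>i. X i \<omega>) {1}) -` ?B \<inter> space M = C1"
        by (auto simp: C1_def space_PiM)
      show ?thesis using indep_varD[OF indB As Bs] unfolding e1 e2 e3 .
    qed
    ultimately have "prob (C0 \<inter> C1) = exp (-u) / (1+v) * exp (-w)" by simp
    also have "\<dots> = exp (-(a / gD)) / (1 + b / gD)"
    proof -
      have "u + w = a / gD" using al gD by (simp add: u_def w_def a_def field_simps)
      moreover have "v = b / gD" using al gD by (simp add: v_def b_def field_simps)
      ultimately show ?thesis by (simp add: exp_add[symmetric] field_simps)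
    qed
    finally have "prob (C0 \<inter> C1) = exp (-(a / gD)) / (1 + b / gD)" .
    then show ?thesis unfolding S using prob_compl[of "C0 \<inter> C1"] C0m C1m by simp
  qed
  have ev: "\<forall>\<^sub>F gD in at_top. gD * (1 - exp (-(a / gD)) / (1 + b / gD)) =
      gD * measure M {\<omega> \<in> space M. secrecy_rate2 gE alpha gD (h 0 \<omega>) (h 1 \<omega>) (h 2 \<omega>) < R}"
    using eventually_gt_at_top[of 0] by eventually_elim (simp only: key)
  have "M2_const gE alpha R > 0" using a0 b0 M2 by simp
  moreover have "((\<lambda>gD. gD * measure M {\<omega> \<in> space M.
        secrecy_rate2 gE alpha gD (h 0 \<omega>) (h 1 \<omega>) (h 2 \<omega>) < R}) \<longlongrightarrow> M2_const gE alpha R) at_top"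
    unfolding M2 using tendsto_cong[OF ev] lim_aux[of a b] by simp
  ultimately show ?thesis ..
qed

end
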